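(* (1) For all $(x,v)\in\mathbb R^3_0\times\mathbb R^3$, $\nabla_xV(x,v)\cdot v + \nabla_vV(x,v)\cdot(-\mu x/|x|^3)=0$, where $\nabla_x V= k_1 v\times\Delta L + k_2\big(v\times(\Delta A\times v)-\tfrac{\mu}{|x|}\Delta A+\tfrac{\mu}{|x|^3}xx^T\Delta A\big)$ and $\nabla_v V = k_1\Delta L\times x + k_2\big((x\times v)\times\Delta A + x\times(v\times\Delta A)\big)$, with $\Delta L=L(x,v)-L_0$, $\Delta A=A(x,v)-A_0$. (2) For any $c$ with $0<c<\min\{k_1|L_0|^2/2,\ k_2(\mu-|A_0|)^2/2\}$, the set $V^{-1}([0,c])$ is a compact subset of $\mathbb R^3_0\times\mathbb R^3$.
   Context: $\mathbb R^3_0=\mathbb R^3\setminus\{0\}$, $\mu>0$. $L(x,v)=x\times v$ (angular momentum) and $A(x,v)=v\times(x\times v)-\mu x/|x|$ (Laplace–Runge–Lenz vector). Fix $L_0,A_0\in\mathbb R^3$ with $L_0\perp A_0$, $L_0\ne0$, $|A_0|<\mu$. With $k_1,k_2>0$, $V(x,v)=\tfrac{k_1}{2}|L(x,v)-L_0|^2+\tfrac{k_2}{2}|A(x,v)-A_0|^2$ on $\mathbb R^3_0\times\mathbb R^3$. *)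

theory Defs
  imports "HOL-Analysis.Analysis"
begin

definition angmom :: "real^3 \<Rightarrow> real^3 \<Rightarrow> real^3" where
  "angmom x v = cross3 x v"

definition lrl :: "real \<Rightarrow> real^3 \<Rightarrow> real^3 \<Rightarrow> real^3" where
  "lrl mu x v = cross3 v (cross3 x v) - (mu / norm x) *\<^sub>R x"

text \<open>V(x,v) = k1/2 |L - L0|^2 + k2/2 |A - A0|^2 (meaningful for x \<noteq> 0).\<close>
definition Vfun :: "real \<Rightarrow> real \<Rightarrow> real \<Rightarrow> real^3 \<Rightarrow> real^3 \<Rightarrow> real^3 \<Rightarrow> real^3 \<Rightarrow> real" where
  "Vfun mu k1 k2 L0 A0 x v =
     k1 / 2 * (norm (angmom x v - L0))\<^sup>2 + k2 / 2 * (norm (lrl mu x v - A0))\<^sup>2"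

definition gradxV :: "real \<Rightarrow> real \<Rightarrow> real \<Rightarrow> real^3 \<Rightarrow> real^3 \<Rightarrow> real^3 \<Rightarrow> real^3 \<Rightarrow> real^3" where
  "gradxV mu k1 k2 L0 A0 x v =
     (let dL = angmom x v - L0; dA = lrl mu x v - A0 in
      k1 *\<^sub>R cross3 v dL
      + k2 *\<^sub>R (cross3 v (cross3 dA v) - (mu / norm x) *\<^sub>R dA
                 + (mu / norm x ^ 3) *\<^sub>R ((x \<bullet> dA) *\<^sub>R x)))"

definition gradvV :: "real \<Rightarrow> real \<Rightarrow> real \<Rightarrow> real^3 \<Rightarrow> real^3 \<Rightarrow> real^3 \<Rightarrow> real^3 \<Rightarrow> real^3" where
  "gradvV mu k1 k2 L0 A0 x v =
     (let dL = angmom x v - L0; dA = lrl mu x v - A0 in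
      k1 *\<^sub>R cross3 dL x
      + k2 *\<^sub>R (cross3 (cross3 x v) dA + cross3 x (cross3 v dA)))"

end

theory Submission
  imports Defs
begin


lemma bb_cross: "bounded_bilinear cross3"
  using bilinear_cross bilinear_conv_bounded_bilinear by blast

lemmas has_derivative_cross[derivative_intros] = bounded_bilinear.FDERIV[OF bb_cross]

lemma has_derivative_norm_comp[derivative_intros]:
  assumes "(f has_derivative f') (at p within S)" "f p \<noteq> 0"
  shows "((\<lambda>p. norm (f p)) has_derivative (\<lambda>h. f' h \<bullet> sgn (f p))) (at p within S)"
  using has_derivative_compose[OF assms(1) has_derivative_norm[OF assms(2)]] by simp

lemma alg:
  fixes x v h k dL dA :: "real^3" and b c p q :: real
  shows "p * (dL \<bullet> (cross3 x k + cross3 h v)) +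
     q * (dA \<bullet> (cross3 v (cross3 x k + cross3 h v) + cross3 k (cross3 x v) - (b *\<^sub>R h - (c * (h \<bullet> x)) *\<^sub>R x)))
   = (p *\<^sub>R cross3 v dL + q *\<^sub>R (cross3 v (cross3 dA v) - b *\<^sub>R dA + c *\<^sub>R ((x \<bullet> dA) *\<^sub>R x))) \<bullet> h
     + (p *\<^sub>R cross3 dL x + q *\<^sub>R (cross3 (cross3 x v) dA + cross3 x (cross3 v dA))) \<bullet> k"
    by (simp add: cross3_simps inner_commute)

lemma dV:
  fixes x v :: "real^3"
  assumes "x \<noteq> 0"
  shows "((\<lambda>p. Vfun mu k1 k2 L0 A0 (fst p) (snd p)) has_derivative (\<lambda>(h, k). gradxV mu k1 k2 L0 A0 x v \<bullet> h + gradvV mu k1 k2 L0 A0 x v \<bullet> k)) (at (x, v))"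
  unfolding Vfun_def angmom_def lrl_def power2_norm_eq_inner
  apply (rule has_derivative_eq_rhs)
  apply (rule derivative_eq_intros | simp add: assms)+
  apply (rule ext)
  apply (clarsimp simp: gradxV_def gradvV_def Let_def)
  subgoal for h k
  proof -
    have c: "mu * (inverse (norm x) * (h \<bullet> sgn x) * inverse (norm x)) = (mu/norm x^3) * (h\<bullet>x)"
      using assms by (simp add: sgn_div_norm field_simps power3_eq_cube inner_commute)
    show ?thesis unfolding c
      using alg[where p=k1 and q=k2 and x=x and v=v and h=h and k=k and dL="cross3 x v - L0"
          and dA="cross3 v (cross3 x v) - (mu/norm x) *\<^sub>R x - A0" and b="mu/norm x" and c="mu/norm x^3"]
      by (simp add: inner_commute angmom_def lrl_def)
  qed
  done


lemma energy_poly: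
  fixes x v :: "real^3"
  shows "(cross3 v (cross3 x v)) \<bullet> (cross3 v (cross3 x v)) = (v \<bullet> v) * ((cross3 x v) \<bullet> (cross3 x v))"
    and "(cross3 v (cross3 x v)) \<bullet> x = (cross3 x v) \<bullet> (cross3 x v)"
  by (simp_all add: cross3_simps)

lemma energy:
  fixes x v :: "real^3" and mu :: real
  assumes "x \<noteq> 0"
  shows "(norm (lrl mu x v))\<^sup>2 = mu\<^sup>2 + ((norm v)\<^sup>2 - 2 * mu / norm x) * (norm (angmom x v))\<^sup>2"
proof -
  let ?m = "mu / norm x"
  have xx: "x \<bullet> x = (norm x)\<^sup>2" by (simp add: power2_norm_eq_inner)
  have "(norm (lrl mu x v))\<^sup>2 = (cross3 v (cross3 x v) - ?m *\<^sub>R x) \<bullet> (cross3 v (cross3 x v) - ?m *\<^sub>R x)"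
    by (simp add: lrl_def power2_norm_eq_inner)
  also have "\<dots> = (cross3 v (cross3 x v)) \<bullet> (cross3 v (cross3 x v)) - 2 * ?m * ((cross3 v (cross3 x v)) \<bullet> x) + ?m\<^sup>2 * (x \<bullet> x)"
    by (simp add: inner_diff_left inner_diff_right inner_commute power2_eq_square algebra_simps)
  also have "\<dots> = (v \<bullet> v) * ((cross3 x v) \<bullet> (cross3 x v)) - 2 * ?m * ((cross3 x v) \<bullet> (cross3 x v)) + mu\<^sup>2"
    unfolding energy_poly xx using assms by (simp add: power_divide)
  finally show ?thesis by (simp add: angmom_def power2_norm_eq_inner[symmetric] algebra_simps)
qed
lemma Vfun_nonneg: "k1 > 0 \<Longrightarrow> k2 > 0 \<Longrightarrow> Vfun mu k1 k2 L0 A0 x v \<ge> 0"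
  by (simp add: Vfun_def)

lemma bounds:
  fixes x v L0 A0 :: "real^3" and mu k1 k2 c :: real
  assumes mu: "mu > 0" and k1: "k1 > 0" and k2: "k2 > 0"
    and cL: "2 * c / k1 < (norm L0)\<^sup>2" and cA: "2 * c / k2 < (mu - norm A0)\<^sup>2"
    and A0: "norm A0 < mu" and x: "x \<noteq> 0" and V: "Vfun mu k1 k2 L0 A0 x v \<le> c"
  defines "a \<equiv> sqrt (2 * c / k1)" and "b \<equiv> sqrt (2 * c / k2)"
  defines "r0 \<equiv> (norm L0 - a)\<^sup>2 / (2 * mu)"
  defines "eps \<equiv> (mu\<^sup>2 - (norm A0 + b)\<^sup>2) / (norm L0 + a)\<^sup>2"
  shows "r0 \<le> norm x \<and> norm x \<le> 2 * mu / eps \<and> norm v \<le> sqrt (2 * mu / r0)"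
proof -
  define L where "L = angmom x v"
  define A where "A = lrl mu x v"
  define r where "r = norm x"
  have r: "r > 0" using x by (simp add: r_def)
  have V1: "k1 / 2 * (norm (L - L0))\<^sup>2 \<le> c" and V2: "k2 / 2 * (norm (A - A0))\<^sup>2 \<le> c"
    using V k1 k2 unfolding Vfun_def L_def A_def
    by (smt (verit) mult_nonneg_nonneg zero_le_power2 divide_nonneg_pos)+
  have a0: "a \<ge> 0" and b0: "b \<ge> 0" using V1 k1 k2 unfolding a_def b_def
    by (smt (verit) divide_nonneg_pos mult_nonneg_nonneg zero_le_power2 real_sqrt_ge_zero)+
  have dL: "norm (L - L0) \<le> a" unfolding a_def
    by (rule real_le_rsqrt) (use V1 k1 in \<open>simp add: field_simps\<close>)
  have dA: "norm (A - A0) \<le> b" unfolding b_def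
    by (rule real_le_rsqrt) (use V2 k2 in \<open>simp add: field_simps\<close>)
  have aL: "a < norm L0" unfolding a_def
    using cL by (metis norm_ge_zero real_sqrt_abs real_sqrt_less_mono abs_of_nonneg)
  have bA: "b < mu - norm A0" unfolding b_def
    using cA A0 by (metis diff_ge_0_iff_ge less_imp_le real_sqrt_abs real_sqrt_less_mono abs_of_nonneg)
  have Llo: "norm L0 - a \<le> norm L" using dL norm_triangle_ineq2[of L0 L] norm_minus_commute[of L L0] by linarith
  have Lhi: "norm L \<le> norm L0 + a" using dL norm_triangle_ineq2[of L L0] by linarith
  have Ahi: "norm A \<le> norm A0 + b" using dA norm_triangle_ineq2[of A A0] by linarith
  have l1: "norm L0 - a > 0" using aL by simp
  have Lpos: "norm L > 0" using Llo l1 by linarith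
  have en: "(norm A)\<^sup>2 = mu\<^sup>2 + ((norm v)\<^sup>2 - 2 * mu / r) * (norm L)\<^sup>2"
    using energy[OF x] unfolding A_def L_def r_def .
  define e where "e = 2 * mu / r - (norm v)\<^sup>2"
  define d where "d = mu\<^sup>2 - (norm A0 + b)\<^sup>2"
  have d: "d > 0" unfolding d_def using bA b0 A0
    by (smt (verit) norm_ge_zero power_strict_mono zero_less_numeral)
  have Asq: "(norm A)\<^sup>2 \<le> (norm A0 + b)\<^sup>2" using Ahi by (simp add: power_mono)
  have eL: "e * (norm L)\<^sup>2 \<ge> d" unfolding e_def d_def using en Asq by (simp add: algebra_simps)
  have e: "e > 0" using eL d Lpos
    by (smt (verit) mult_nonpos_nonneg zero_le_power2)
  have L2: "(norm L)\<^sup>2 \<le> (norm L0 + a)\<^sup>2" using Lhi Lpos by (simp add: power_mono)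
  have "e * (norm L0 + a)\<^sup>2 \<ge> d" using eL L2 e
    by (smt (verit) mult_left_mono)
  moreover have la: "(norm L0 + a)\<^sup>2 > 0" using l1 a0 by simp
  ultimately have ee: "eps \<le> e" unfolding eps_def d_def[symmetric] by (simp add: divide_le_eq)
  have eps: "eps > 0" unfolding eps_def using d la by (simp add: d_def)
  have "2 * mu / r \<ge> eps" using ee e_def by (smt (verit) zero_le_power2)
  then have R: "r \<le> 2 * mu / eps" using r eps mu by (simp add: field_simps)
  have v2: "(norm v)\<^sup>2 \<le> 2 * mu / r" using e unfolding e_def by simp
  have "(norm L)\<^sup>2 \<le> (r * norm v)\<^sup>2"
    using norm_cross_dot[of x v] unfolding L_def angmom_def r_def
    by (smt (verit) zero_le_power2)
  also have "\<dots> = r\<^sup>2 * (norm v)\<^sup>2" by (simp add: power_mult_distrib)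
  also have "\<dots> \<le> r\<^sup>2 * (2 * mu / r)" using v2 by (intro mult_left_mono) simp_all
  also have "\<dots> = 2 * mu * r" using r by (simp add: power2_eq_square field_simps)
  finally have "(norm L)\<^sup>2 \<le> 2 * mu * r" .
  moreover have "(norm L0 - a)\<^sup>2 \<le> (norm L)\<^sup>2" using Llo l1 by (simp add: power_mono)
  ultimately have r0: "r0 \<le> r" unfolding r0_def using mu by (simp add: divide_le_eq mult.commute)
  have r0p: "r0 > 0" unfolding r0_def using l1 mu by simp
  have "(norm v)\<^sup>2 \<le> 2 * mu / r0" using v2 r0 r0p mu
    by (smt (verit) divide_left_mono mult_pos_pos)
  then have "norm v \<le> sqrt (2 * mu / r0)" by (rule real_le_rsqrt)
  with r0 R show ?thesis unfolding r_def by simp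
qed

lemma alg2:
  fixes x v dL dA :: "real^3" and b c p q :: real
  assumes "x \<bullet> x * c = b"
  shows "(p *\<^sub>R cross3 v dL + q *\<^sub>R (cross3 v (cross3 dA v) - b *\<^sub>R dA + c *\<^sub>R ((x \<bullet> dA) *\<^sub>R x))) \<bullet> v
     + (p *\<^sub>R cross3 dL x + q *\<^sub>R (cross3 (cross3 x v) dA + cross3 x (cross3 v dA))) \<bullet> (- c *\<^sub>R x) = 0"
  unfolding assms[symmetric]
  by (simp add: cross3_simps inner_commute)

theorem lemma6:
  fixes mu k1 k2 :: real and L0 A0 :: "real^3"
  assumes "mu > 0" and "k1 > 0" and "k2 > 0"
    and "L0 \<bullet> A0 = 0" and "L0 \<noteq> 0" and "norm A0 < mu"
  shows "(\<forall>x v. x \<noteq> 0 \<longrightarrow>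
            ((\<lambda>(y, w). Vfun mu k1 k2 L0 A0 y w) has_derivative
               (\<lambda>(h, k). gradxV mu k1 k2 L0 A0 x v \<bullet> h + gradvV mu k1 k2 L0 A0 x v \<bullet> k))
              (at (x, v))
          \<and> gradxV mu k1 k2 L0 A0 x v \<bullet> v
            + gradvV mu k1 k2 L0 A0 x v \<bullet> (- (mu / norm x ^ 3) *\<^sub>R x) = 0)
       \<and> (\<forall>c. 0 < c \<and> c < min (k1 * (norm L0)\<^sup>2 / 2) (k2 * (mu - norm A0)\<^sup>2 / 2) \<longrightarrow>
            compact {(x, v). x \<noteq> 0 \<and> Vfun mu k1 k2 L0 A0 x v \<in> {0..c}})"
proof (intro conjI allI impI)
  fix x v :: "real^3" assume x: "x \<noteq> 0"
  show "((\<lambda>(y, w). Vfun mu k1 k2 L0 A0 y w) has_derivative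
               (\<lambda>(h, k). gradxV mu k1 k2 L0 A0 x v \<bullet> h + gradvV mu k1 k2 L0 A0 x v \<bullet> k))
              (at (x, v))"
    using dV[OF x] by (simp add: case_prod_beta')
  have xx: "x \<bullet> x * (mu / norm x ^ 3) = mu / norm x"
    using x by (simp add: power2_norm_eq_inner[symmetric] power3_eq_cube power2_eq_square field_simps)
  show "gradxV mu k1 k2 L0 A0 x v \<bullet> v
            + gradvV mu k1 k2 L0 A0 x v \<bullet> (- (mu / norm x ^ 3) *\<^sub>R x) = 0"
    unfolding gradxV_def gradvV_def Let_def
    using alg2[OF xx] by simp
next
  fix c :: real
  assume c: "0 < c \<and> c < min (k1 * (norm L0)\<^sup>2 / 2) (k2 * (mu - norm A0)\<^sup>2 / 2)"
  have cL: "2 * c / k1 < (norm L0)\<^sup>2" using c assms(2) by (simp add: field_simps)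
  have cA: "2 * c / k2 < (mu - norm A0)\<^sup>2" using c assms(3) by (simp add: field_simps)
  define a where "a = sqrt (2 * c / k1)"
  define b where "b = sqrt (2 * c / k2)"
  define r0 where "r0 = (norm L0 - a)\<^sup>2 / (2 * mu)"
  define eps where "eps = (mu\<^sup>2 - (norm A0 + b)\<^sup>2) / (norm L0 + a)\<^sup>2"
  define R where "R = 2 * mu / eps"
  define W where "W = sqrt (2 * mu / r0)"
  have aL: "a < norm L0" unfolding a_def
    using cL by (metis norm_ge_zero real_sqrt_abs real_sqrt_less_mono abs_of_nonneg)
  have r0p: "r0 > 0" unfolding r0_def using aL assms(1) by simp
  define Vm where "Vm = (\<lambda>x v. k1 / 2 * (norm (cross3 x v - L0))\<^sup>2
     + k2 / 2 * (norm (cross3 v (cross3 x v) - (mu / max r0 (norm x)) *\<^sub>R x - A0))\<^sup>2)"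
  have VV: "r0 \<le> norm x \<Longrightarrow> Vm x v = Vfun mu k1 k2 L0 A0 x v" for x v
    unfolding Vm_def Vfun_def angmom_def lrl_def by (simp add: max_absorb2)
  have eq: "{(x, v). x \<noteq> 0 \<and> Vfun mu k1 k2 L0 A0 x v \<in> {0..c}}
      = (cball 0 R \<times> cball 0 W) \<inter> {p. r0 \<le> norm (fst p) \<and> Vm (fst p) (snd p) \<le> c}"
  proof (intro set_eqI iffI)
    fix p assume "p \<in> {(x, v). x \<noteq> 0 \<and> Vfun mu k1 k2 L0 A0 x v \<in> {0..c}}"
    then obtain x v where p: "p = (x, v)" and x: "x \<noteq> 0" and V: "Vfun mu k1 k2 L0 A0 x v \<le> c"
      by auto
    have "r0 \<le> norm x \<and> norm x \<le> 2 * mu / eps \<and> norm v \<le> sqrt (2 * mu / r0)"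
      unfolding r0_def eps_def a_def b_def
      by (rule bounds[OF assms(1,2,3) cL cA assms(6) x V])
    then show "p \<in> (cball 0 R \<times> cball 0 W) \<inter> {p. r0 \<le> norm (fst p) \<and> Vm (fst p) (snd p) \<le> c}"
      using VV V unfolding p R_def W_def by simp
  next
    fix p assume "p \<in> (cball 0 R \<times> cball 0 W) \<inter> {p. r0 \<le> norm (fst p) \<and> Vm (fst p) (snd p) \<le> c}"
    then obtain x v where p: "p = (x, v)" and x: "r0 \<le> norm x" and V: "Vm x v \<le> c"
      by (cases p) auto
    have "x \<noteq> 0" using x r0p by auto
    then show "p \<in> {(x, v). x \<noteq> 0 \<and> Vfun mu k1 k2 L0 A0 x v \<in> {0..c}}"
      using VV[OF x] V Vfun_nonneg[OF assms(2,3)] unfolding p by simp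
  qed
  have cont: "continuous_on UNIV (\<lambda>p. Vm (fst p) (snd p))"
    unfolding Vm_def using r0p
    by (intro continuous_intros continuous_on_cross) auto
  have "closed {p. r0 \<le> norm (fst p) \<and> Vm (fst p) (snd p) \<le> c}"
    by (intro closed_Collect_conj closed_Collect_le cont continuous_intros)
  then show "compact {(x, v). x \<noteq> 0 \<and> Vfun mu k1 k2 L0 A0 x v \<in> {0..c}}"
    unfolding eq by (intro compact_Int_closed compact_Times compact_cball)
qed

end
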